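(* Let $q$ be an indeterminate and work in the algebra of formal series in the noncommuting indeterminates $S_0,S_1,S_2,\dots$ over $\mathbb{C}(q)$, graded by $\deg S_k=k$. Define $g_n$ ($n\ge 0$) by $g_0=S_0$ and, for $n\ge1$, $$(q^n-1)\,g_n=\sum_{k=1}^{n} S_k\sum_{\substack{j_1+\cdots+j_{k+1}=n-k\\ j_i\ge 0}} g_{j_1}g_{j_2}\cdots g_{j_{k+1}},$$ and set $g=\sum_{n\ge0}g_n$. Then $$g=\sum_{T} m_T(q)\, S^{I(T)},\qquad m_T(q)=\prod_{v}\frac{1}{q^{\phi(v)-1}-1},$$ where $T$ runs over all reduced plane trees (including the tree consisting of a single leaf), $I(T)$ is the Polish code of $T$, the product runs over the internal vertices $v$ of $T$, and $\phi(v)$ is the number of leaves of the subtree of $T$ rooted at $v$. More precisely, for each $n\ge 0$, $g_n$ is the sum of $m_T(q)S^{I(T)}$ over the reduced plane trees $T$ with $n+1$ leaves.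
   Context: A reduced plane tree (Schröder tree) is a rooted plane (ordered) tree in which every internal vertex has at least two children; vertices without children are leaves. The Polish code $I(T)=(i_1,\dots,i_m)$ of $T$ is the sequence obtained by listing the vertices in preorder (root first, then the subtrees of the children from left to right, recursively) and recording $0$ for a leaf and $k$ for an internal vertex with $k+1$ children. For a sequence $I=(i_1,\dots,i_m)$ of nonnegative integers, $S^I=S_{i_1}S_{i_2}\cdots S_{i_m}$. The empty product $m_T(q)$ for the single-leaf tree equals $1$. *)

theory Defs
  imports "HOL-Computational_Algebra.Polynomial" "HOL-Computational_Algebra.Fraction_Field"
begin

type_synonym coef = "complex poly fract"

definition qq :: coef where
  "qq = Fract [:0, 1:] 1"

text \<open>Noncommutative formal series in S_0, S_1, ...: a series is the function
  giving the coefficient of each word (word = list of letter indices).\<close>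
type_synonym series = "nat list \<Rightarrow> coef"

definition sone :: series where
  "sone w = (if w = [] then 1 else 0)"

definition letter :: "nat \<Rightarrow> series" where
  "letter k w = (if w = [k] then 1 else 0)"

definition sprod :: "series \<Rightarrow> series \<Rightarrow> series" where
  "sprod f g w = (\<Sum>i\<le>length w. f (take i w) * g (drop i w))"

definition sprod_list :: "series list \<Rightarrow> series" where
  "sprod_list fs = foldr sprod fs sone"

text \<open>Plane trees; a leaf is Node [].\<close>
datatype ptree = Node "ptree list"

fun reduced :: "ptree \<Rightarrow> bool" where
  "reduced (Node ts) = (length ts \<noteq> 1 \<and> (\<forall>t\<in>set ts. reduced t))"

fun nleaves :: "ptree \<Rightarrow> nat" where
  "nleaves (Node ts) = (if ts = [] then 1 else sum_list (map nleaves ts))"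

fun polish :: "ptree \<Rightarrow> nat list" where
  "polish (Node ts) = (if ts = [] then 0 else length ts - 1) # concat (map polish ts)"

fun mT :: "ptree \<Rightarrow> coef" where
  "mT (Node ts) = (if ts = [] then 1
     else inverse (qq ^ (nleaves (Node ts) - 1) - 1) * prod_list (map mT ts))"

end

theory Submission
  imports Defs
begin

definition ms :: "'a set \<Rightarrow> ('a \<Rightarrow> nat list) \<Rightarrow> ('a \<Rightarrow> coef) \<Rightarrow> series" where
  "ms A p c w = (\<Sum>a\<in>A. if p a = w then c a else 0)"

definition Tset :: "nat \<Rightarrow> ptree set" where
  "Tset n = {T. reduced T \<and> nleaves T = n + 1}"

lemma split_sum_delta:
  "(\<Sum>i\<le>length w. if x = take i w \<and> y = drop i w then (c::coef) else 0)
    = (if x @ y = w then c else 0)"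
proof (cases "x @ y = w")
  case True
  have "(\<Sum>i\<le>length w. if x = take i w \<and> y = drop i w then c else 0)
     = (\<Sum>i\<le>length w. if i = length x then c else 0)"
  proof (rule sum.cong)
    fix i assume i: "i \<in> {..length w}"
    have "(x = take i w \<and> y = drop i w) = (i = length x)"
    proof
      assume "x = take i w \<and> y = drop i w"
      then show "i = length x" using i by auto
    next
      assume "i = length x"
      then show "x = take i w \<and> y = drop i w" using True by auto
    qed
    then show "(if x = take i w \<and> y = drop i w then c else 0) = (if i = length x then c else 0)"
      by simp
  qed simp
  also have "\<dots> = c" using True by (auto simp: sum.delta')
  finally show ?thesis using True by simp
next
  case False
  have "\<And>i. \<not> (x = take i w \<and> y = drop i w)"
    using False by (metis append_take_drop_id)
  then show ?thesis using False by (auto intro!: sum.neutral)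
qed

lemma sprod_ms:
  "sprod (ms A p c) (ms B r d) = ms (A \<times> B) (\<lambda>(a,b). p a @ r b) (\<lambda>(a,b). c a * d b)"
proof
  fix w
  have "sprod (ms A p c) (ms B r d) w =
     (\<Sum>i\<le>length w. \<Sum>a\<in>A. \<Sum>b\<in>B. if p a = take i w \<and> r b = drop i w then c a * d b else 0)"
    unfolding sprod_def ms_def sum_product
    by (intro sum.cong refl) auto
  also have "\<dots> = (\<Sum>a\<in>A. \<Sum>b\<in>B. \<Sum>i\<le>length w. if p a = take i w \<and> r b = drop i w then c a * d b else 0)"
    by (subst sum.swap) (subst sum.swap, rule refl)
  also have "\<dots> = (\<Sum>a\<in>A. \<Sum>b\<in>B. if p a @ r b = w then c a * d b else 0)"
    by (simp only: split_sum_delta)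
  also have "\<dots> = ms (A \<times> B) (\<lambda>(a,b). p a @ r b) (\<lambda>(a,b). c a * d b) w"
    unfolding ms_def sum.cartesian_product by (auto intro!: sum.cong simp: split_def)
  finally show "sprod (ms A p c) (ms B r d) w = ms (A \<times> B) (\<lambda>(a,b). p a @ r b) (\<lambda>(a,b). c a * d b) w" .
qed

lemma ms_reindex: "inj_on h X \<Longrightarrow> ms (h ` X) p c = ms X (p \<circ> h) (c \<circ> h)"
  unfolding ms_def comp_def by (rule ext) (simp add: sum.reindex)

lemma ms_cong: "A = B \<Longrightarrow> (\<And>a. a \<in> B \<Longrightarrow> p a = p' a \<and> c a = c' a) \<Longrightarrow> ms A p c = ms B p' c'"
  unfolding ms_def by (rule ext) (intro sum.cong; simp)

lemma ms_UN:
  assumes "finite I" "\<And>i. i \<in> I \<Longrightarrow> finite (A i)"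
    "\<And>i j. i \<in> I \<Longrightarrow> j \<in> I \<Longrightarrow> i \<noteq> j \<Longrightarrow> A i \<inter> A j = {}"
  shows "(\<Sum>i\<in>I. ms (A i) p c w) = ms (\<Union>i\<in>I. A i) p c w"
  unfolding ms_def using assms by (subst sum.UNION_disjoint) auto

lemma set_Cons_image: "set_Cons A B = (\<lambda>(a,b). a # b) ` (A \<times> B)"
  unfolding set_Cons_def by auto

lemma sprod_list_ms:
  "sprod_list (map (\<lambda>j. ms (Tset j) polish mT) js)
     = ms (listset (map Tset js)) (\<lambda>ts. concat (map polish ts)) (\<lambda>ts. prod_list (map mT ts))"
proof (induction js)
  case Nil
  show ?case unfolding sprod_list_def by (auto simp: sone_def ms_def)
next
  case (Cons j js)
  have "sprod_list (map (\<lambda>j. ms (Tset j) polish mT) (j # js))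
     = sprod (ms (Tset j) polish mT) (sprod_list (map (\<lambda>j. ms (Tset j) polish mT) js))"
    unfolding sprod_list_def by simp
  also have "\<dots> = ms (Tset j \<times> listset (map Tset js))
      (\<lambda>(a,b). polish a @ concat (map polish b)) (\<lambda>(a,b). mT a * prod_list (map mT b))"
    unfolding Cons sprod_ms ..
  also have "\<dots> = ms ((\<lambda>(a,b). a # b) ` (Tset j \<times> listset (map Tset js)))
      (\<lambda>ts. concat (map polish ts)) (\<lambda>ts. prod_list (map mT ts))"
    by (subst ms_reindex) (auto simp: inj_on_def comp_def split_def)
  finally show ?case by (simp add: set_Cons_image)
qed

lemma sum_ge_len: "(\<And>t. t \<in> set ts \<Longrightarrow> (1::nat) \<le> f t) \<Longrightarrow> length ts \<le> sum_list (map f ts)"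
proof (induction ts)
  case (Cons a ts)
  then have "1 \<le> f a" "length ts \<le> sum_list (map f ts)" by auto
  then show ?case by simp
qed simp

lemma sum_minus_one: "(\<And>t. t \<in> set ts \<Longrightarrow> (1::nat) \<le> f t) \<Longrightarrow>
   sum_list (map (\<lambda>t. f t - 1) ts) = sum_list (map f ts) - length ts"
proof (induction ts)
  case (Cons a ts)
  then have "length ts \<le> sum_list (map f ts)" by (intro sum_ge_len) auto
  with Cons show ?case by auto
qed simp

lemma nleaves_pos: "1 \<le> nleaves T"
proof (induction T)
  case (Node ts)
  show ?case
  proof (cases "ts = []")
    case False
    have "length ts \<le> sum_list (map nleaves ts)" using Node by (intro sum_ge_len) auto
    with False show ?thesis by (cases ts) (auto simp: Suc_le_eq)
  qed simp
qed

lemma Tset0: "Tset 0 = {Node []}"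
proof -
  have "T = Node []" if "reduced T" "nleaves T = 1" for T
  proof (cases T)
    case (Node ts)
    show ?thesis
    proof (rule ccontr)
      assume "T \<noteq> Node []"
      then have "ts \<noteq> []" using Node by simp
      then have "length ts \<ge> 2" using that Node by (cases ts) (auto simp: Suc_le_eq)
      moreover have "length ts \<le> sum_list (map nleaves ts)" by (intro sum_ge_len nleaves_pos)
      ultimately show False using that Node \<open>ts \<noteq> []\<close> by simp
    qed
  qed
  then show ?thesis unfolding Tset_def by auto
qed

definition Fn :: "nat \<Rightarrow> ptree list set" where
  "Fn n = {ts. 2 \<le> length ts \<and> (\<forall>t\<in>set ts. reduced t) \<and> sum_list (map nleaves ts) = n + 1}"

lemma Tset_Node: "1 \<le> n \<Longrightarrow> Tset n = Node ` Fn n"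
proof
  assume n: "1 \<le> n"
  show "Tset n \<subseteq> Node ` Fn n"
  proof
    fix T assume T: "T \<in> Tset n"
    obtain ts where ts: "T = Node ts" by (cases T)
    have "ts \<noteq> []" using T ts n unfolding Tset_def by auto
    then have "length ts \<ge> 2" using T ts unfolding Tset_def by (cases ts) (auto simp: Suc_le_eq)
    then show "T \<in> Node ` Fn n" using T ts \<open>ts \<noteq> []\<close> unfolding Tset_def Fn_def by auto
  qed
next
  show "Node ` Fn n \<subseteq> Tset n"
    unfolding Tset_def Fn_def by auto
qed

lemma child_small:
  assumes "2 \<le> length ts" "t \<in> set ts"
  shows "nleaves t < sum_list (map nleaves ts)"
proof -
  have "sum_list (map nleaves ts) = nleaves t + sum_list (map nleaves (remove1 t ts))"
    using assms(2) by (rule sum_list_map_remove1)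
  moreover have "length (remove1 t ts) \<le> sum_list (map nleaves (remove1 t ts))"
    by (intro sum_ge_len nleaves_pos)
  moreover have "length (remove1 t ts) \<ge> 1" using assms by (simp add: length_remove1)
  ultimately show ?thesis by simp
qed

lemma finite_Tset: "finite (Tset n)"
proof (induction n rule: less_induct)
  case (less n)
  let ?U = "\<Union>j<n. Tset j"
  have fU: "finite ?U" using less by auto
  have "Tset n \<subseteq> insert (Node []) (Node ` {ts. set ts \<subseteq> ?U \<and> length ts \<le> n + 1})"
  proof
    fix T assume T: "T \<in> Tset n"
    obtain ts where ts: "T = Node ts" by (cases T)
    show "T \<in> insert (Node []) (Node ` {ts. set ts \<subseteq> ?U \<and> length ts \<le> n + 1})"
    proof (cases "ts = []")
      case False
      then have l2: "length ts \<ge> 2" using T ts unfolding Tset_def by (cases ts) (auto simp: Suc_le_eq)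
      have sum: "sum_list (map nleaves ts) = n + 1" using T ts False unfolding Tset_def by simp
      have "set ts \<subseteq> ?U"
      proof
        fix t assume t: "t \<in> set ts"
        have "nleaves t < n + 1" using child_small[OF l2 t] sum by simp
        moreover have "reduced t" using T ts t unfolding Tset_def by auto
        ultimately have "t \<in> Tset (nleaves t - 1)" "nleaves t - 1 < n"
          unfolding Tset_def using nleaves_pos[of t] by auto
        then show "t \<in> ?U" by blast
      qed
      moreover have "length ts \<le> n + 1" using sum sum_ge_len[of ts nleaves] nleaves_pos by auto
      ultimately show ?thesis using ts by auto
    qed (simp add: ts)
  qed
  moreover have "finite {ts. set ts \<subseteq> ?U \<and> length ts \<le> n + 1}"
    using fU by (rule finite_lists_length_le)
  ultimately show ?case by (meson finite.insertI finite_imageI finite_subset)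
qed

lemma listset_mem: "ts \<in> listset As \<longleftrightarrow> list_all2 (\<lambda>t A. t \<in> A) ts As"
proof (induction As arbitrary: ts)
  case Nil
  then show ?case by auto
next
  case (Cons A As)
  show ?case by (cases ts) (auto simp: set_Cons_def Cons)
qed

lemma finite_listset: "(\<And>A. A \<in> set As \<Longrightarrow> finite A) \<Longrightarrow> finite (listset As)"
  by (induction As) (auto simp: set_Cons_image)

definition JS :: "nat \<Rightarrow> nat \<Rightarrow> nat list set" where
  "JS n k = {js. length js = k + 1 \<and> sum_list js = n - k}"

lemma finite_JS: "finite (JS n k)"
proof -
  have "JS n k \<subseteq> {js. set js \<subseteq> {0..n-k} \<and> length js = k + 1}"
    unfolding JS_def using member_le_sum_list by fastforce
  then show ?thesis by (rule finite_subset) (simp add: finite_lists_length_eq)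
qed

lemma listset_Tset: "ts \<in> listset (map Tset js) \<longleftrightarrow> list_all2 (\<lambda>t j. t \<in> Tset j) ts js"
  by (simp add: listset_mem list_all2_map2)

lemma rel_sum:
  "list_all2 (\<lambda>t j. t \<in> Tset j) ts js \<Longrightarrow>
     sum_list (map nleaves ts) = sum_list js + length js \<and> (\<forall>t\<in>set ts. reduced t)"
  by (induction rule: list_all2_induct) (auto simp: Tset_def)

definition U :: "nat \<Rightarrow> nat \<Rightarrow> ptree list set" where
  "U n k = (\<Union>js\<in>JS n k. listset (map Tset js))"

lemma U_len: "ts \<in> U n k \<Longrightarrow> length ts = k + 1"
  by (auto simp: U_def JS_def listset_Tset dest: list_all2_lengthD)

lemma finite_U: "finite (U n k)"
  unfolding U_def using finite_JS by (auto intro!: finite_listset simp: finite_Tset)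

lemma UN_U: assumes "1 \<le> n" shows "(\<Union>k\<in>{1..n}. U n k) = Fn n"
proof
  show "(\<Union>k\<in>{1..n}. U n k) \<subseteq> Fn n"
  proof
    fix ts assume "ts \<in> (\<Union>k\<in>{1..n}. U n k)"
    then obtain k where k: "k \<in> {1..n}" and kk: "ts \<in> U n k" by blast
    then obtain js where js: "js \<in> JS n k" and jj: "ts \<in> listset (map Tset js)"
      unfolding U_def by blast
    have r: "list_all2 (\<lambda>t j. t \<in> Tset j) ts js" using jj listset_Tset by blast
    have "length ts = k + 1" using r js unfolding JS_def by (auto dest: list_all2_lengthD)
    then show "ts \<in> Fn n" using rel_sum[OF r] js k unfolding Fn_def JS_def by auto
  qed
next
  show "Fn n \<subseteq> (\<Union>k\<in>{1..n}. U n k)"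
  proof
    fix ts assume ts: "ts \<in> Fn n"
    define js where "js = map (\<lambda>t. nleaves t - 1) ts"
    have le: "length ts \<le> n + 1" using ts sum_ge_len[of ts nleaves] nleaves_pos
      unfolding Fn_def by auto
    have "sum_list js = sum_list (map nleaves ts) - length ts"
      unfolding js_def by (rule sum_minus_one) (rule nleaves_pos)
    then have "js \<in> JS n (length ts - 1)" using ts le unfolding JS_def js_def Fn_def by auto
    moreover have "list_all2 (\<lambda>t j. t \<in> Tset j) ts js"
      using ts nleaves_pos unfolding js_def list_all2_map2 list_all2_same Fn_def Tset_def
      by (simp add: Suc_le_eq)
    moreover have "length ts - 1 \<in> {1..n}" using ts le unfolding Fn_def by auto
    ultimately show "ts \<in> (\<Union>k\<in>{1..n}. U n k)" unfolding U_def
      using listset_Tset by blast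
  qed
qed

lemma qq_pow_ne: "1 \<le> n \<Longrightarrow> qq ^ n - 1 \<noteq> 0"
proof -
  assume n: "1 \<le> n"
  have "qq ^ n = Fract ([:0,1:] ^ n) 1" unfolding qq_def
    by (induction n) (simp_all add: One_fract_def)
  moreover have "degree (([:0,1:] :: complex poly) ^ n) = n" by (simp add: degree_power_eq)
  then have "([:0,1:] :: complex poly) ^ n \<noteq> 1" using n by auto
  ultimately show ?thesis by (simp add: One_fract_def Zero_fract_def eq_fract)
qed

lemma rel_js: "list_all2 (\<lambda>t j. t \<in> Tset j) ts js \<Longrightarrow> js = map (\<lambda>t. nleaves t - 1) ts"
  by (induction rule: list_all2_induct) (auto simp: Tset_def)

lemma letter_ms: "letter k = ms {()} (\<lambda>_. [k]) (\<lambda>_. 1)"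
  by (rule ext) (auto simp: letter_def ms_def)

lemma ms_scale: "c0 * ms A p c w = ms A p (\<lambda>a. c0 * c a) w"
  unfolding ms_def sum_distrib_left by (intro sum.cong) auto

abbreviation PP :: "ptree list \<Rightarrow> nat list" where "PP ts \<equiv> concat (map polish ts)"
abbreviation CC :: "ptree list \<Rightarrow> coef" where "CC ts \<equiv> prod_list (map mT ts)"

lemma inner_sum:
  "(\<Sum>js \<in> {js. length js = k + 1 \<and> sum_list js = n - k}.
      sprod_list (map (\<lambda>j. ms (Tset j) polish mT) js) u) = ms (U n k) PP CC u"
proof -
  have "(\<Sum>js \<in> JS n k. sprod_list (map (\<lambda>j. ms (Tset j) polish mT) js) u)
      = (\<Sum>js \<in> JS n k. ms (listset (map Tset js)) PP CC u)"
    by (simp add: sprod_list_ms)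
  also have "\<dots> = ms (U n k) PP CC u"
    unfolding U_def
  proof (rule ms_UN)
    show "finite (JS n k)" by (rule finite_JS)
    show "finite (listset (map Tset js))" for js
      by (rule finite_listset) (auto simp: finite_Tset)
    show "listset (map Tset i) \<inter> listset (map Tset j) = {}" if "i \<noteq> j" for i j
      using that rel_js listset_Tset by blast
  qed
  finally show ?thesis unfolding JS_def .
qed

lemma letter_U:
  "sprod (letter k) (ms (U n k) PP CC) w = ms (U n k) (\<lambda>ts. polish (Node ts)) CC w"
proof -
  have "sprod (letter k) (ms (U n k) PP CC)
     = ms ({()} \<times> U n k) (\<lambda>(a,b). [k] @ PP b) (\<lambda>(a,b). 1 * CC b)"
    unfolding letter_ms sprod_ms ..
  also have "{()} \<times> U n k = (\<lambda>b. ((), b)) ` U n k" by auto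
  also have "ms ((\<lambda>b. ((), b)) ` U n k) (\<lambda>(a,b). [k] @ PP b) (\<lambda>(a,b). 1 * CC b)
      = ms (U n k) (\<lambda>b. k # PP b) CC"
    by (subst ms_reindex) (auto simp: inj_on_def comp_def)
  also have "\<dots> = ms (U n k) (\<lambda>ts. polish (Node ts)) CC"
  proof (rule ms_cong)
    fix ts assume "ts \<in> U n k"
    then have "length ts = k + 1" by (rule U_len)
    then show "k # PP ts = polish (Node ts) \<and> CC ts = CC ts" by auto
  qed simp
  finally show ?thesis by simp
qed

lemma key:
  assumes n: "1 \<le> n"
  shows "(qq ^ n - 1) * ms (Tset n) polish mT w =
      (\<Sum>k = 1..n. sprod (letter k)
         (\<lambda>u. \<Sum>js \<in> {js. length js = k + 1 \<and> sum_list js = n - k}.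
                sprod_list (map (\<lambda>j. ms (Tset j) polish mT) js) u) w)"
proof -
  have "(\<Sum>k = 1..n. sprod (letter k)
         (\<lambda>u. \<Sum>js \<in> {js. length js = k + 1 \<and> sum_list js = n - k}.
                sprod_list (map (\<lambda>j. ms (Tset j) polish mT) js) u) w)
     = (\<Sum>k = 1..n. ms (U n k) (\<lambda>ts. polish (Node ts)) CC w)"
    by (simp only: inner_sum letter_U)
  also have "\<dots> = ms (\<Union>k\<in>{1..n}. U n k) (\<lambda>ts. polish (Node ts)) CC w"
  proof (rule ms_UN)
    show "U n i \<inter> U n j = {}" if "i \<noteq> j" for i j
      using that by (auto dest!: U_len)
  qed (auto simp: finite_U)
  also have "\<dots> = ms (Fn n) (\<lambda>ts. polish (Node ts)) CC w" using UN_U[OF n] by simp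
  also have "\<dots> = ms (Fn n) (polish \<circ> Node) ((\<lambda>T. (qq ^ n - 1) * mT T) \<circ> Node) w"
  proof -
    have "ms (Fn n) (\<lambda>ts. polish (Node ts)) CC = ms (Fn n) (polish \<circ> Node) ((\<lambda>T. (qq ^ n - 1) * mT T) \<circ> Node)"
    proof (rule ms_cong)
      fix ts assume ts: "ts \<in> Fn n"
      then have "ts \<noteq> []" "nleaves (Node ts) - 1 = n" unfolding Fn_def by auto
      then show "polish (Node ts) = (polish \<circ> Node) ts \<and> CC ts = ((\<lambda>T. (qq ^ n - 1) * mT T) \<circ> Node) ts"
        using qq_pow_ne[OF n] by simp
    qed simp
    then show ?thesis by simp
  qed
  also have "\<dots> = ms (Node ` Fn n) polish (\<lambda>T. (qq ^ n - 1) * mT T) w"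
    by (subst ms_reindex) (auto simp: inj_on_def)
  also have "\<dots> = (qq ^ n - 1) * ms (Tset n) polish mT w"
    unfolding ms_scale Tset_Node[OF n] ..
  finally show ?thesis ..
qed

theorem mainTheorem1:
  fixes g :: "nat \<Rightarrow> series"
  assumes g0: "g 0 = letter 0"
    and grec: "\<And>n w. n \<ge> 1 \<Longrightarrow>
      (qq ^ n - 1) * g n w =
      (\<Sum>k = 1..n. sprod (letter k)
         (\<lambda>u. \<Sum>js \<in> {js. length js = k + 1 \<and> sum_list js = n - k}.
                sprod_list (map g js) u) w)"
  shows "\<forall>n w. g n w =
           (\<Sum>T \<in> {T. reduced T \<and> nleaves T = n + 1}.
              (if polish T = w then mT T else 0))"
proof -
  have "g n = ms (Tset n) polish mT" for n
  proof (induction n rule: less_induct)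
    case (less n)
    show ?case
    proof (cases "n = 0")
      case True
      then show ?thesis using g0 by (auto simp: Tset0 ms_def letter_def)
    next
      case False
      then have n: "1 \<le> n" by simp
      show ?thesis
      proof
        fix w
        have "(qq ^ n - 1) * g n w =
          (\<Sum>k = 1..n. sprod (letter k)
           (\<lambda>u. \<Sum>js \<in> {js. length js = k + 1 \<and> sum_list js = n - k}.
                sprod_list (map g js) u) w)" by (rule grec[OF n])
        also have "\<dots> = (\<Sum>k = 1..n. sprod (letter k)
           (\<lambda>u. \<Sum>js \<in> {js. length js = k + 1 \<and> sum_list js = n - k}.
                sprod_list (map (\<lambda>j. ms (Tset j) polish mT) js) u) w)"
        proof (intro sum.cong refl arg_cong[where f = "\<lambda>f. sprod _ f _"] ext)
          fix k u js assume k: "k \<in> {1..n}" and js: "js \<in> {js. length js = k + 1 \<and> sum_list js = n - k}"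
          have "map g js = map (\<lambda>j. ms (Tset j) polish mT) js"
          proof (rule map_cong[OF refl])
            fix j assume "j \<in> set js"
            then have "j \<le> n - k" using js member_le_sum_list by fastforce
            then have "j < n" using k by auto
            then show "g j = ms (Tset j) polish mT" by (rule less)
          qed
          then show "sprod_list (map g js) u = sprod_list (map (\<lambda>j. ms (Tset j) polish mT) js) u"
            by (rule arg_cong[where f = "\<lambda>f. sprod_list f u"])
        qed
        also have "\<dots> = (qq ^ n - 1) * ms (Tset n) polish mT w" by (rule key[OF n, symmetric])
        finally show "g n w = ms (Tset n) polish mT w" using qq_pow_ne[OF n] by simp
      qed
    qed
  qed
  then show ?thesis by (simp add: ms_def Tset_def)
qed

end
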